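(* There exist constants $K_1,K_2>0$ (independent of $h$ and of the grid function) such that for every grid function $v\in\mathbb{V}_h$, \[ \|\nabla_hv\|_{l^4}\le K_1\|\nabla_hv\|^{1/2}\Big(2\|\Delta_hv\|^2+\frac{1}{L^2}\|\nabla_hv\|^2\Big)^{1/4} \] and \[ \|\nabla_hv\|_{l^6}\le K_2\|\nabla_hv\|^{1/3}\Big(16\|\Delta_hv\|^2+\frac{1}{L^2}\|\nabla_hv\|^2\Big)^{1/3}. \]
   Context: $L>0$, $M$ a positive integer, $h=L/M$, $\Omega_h=\{(ih,jh):1\le i,j\le M\}$, $\mathbb{V}_h$ the grid functions on $\{(ih,jh):0\le i,j\le M\}$ that are $L$-periodic in each direction. $\Delta_x v_{ij}=(v_{i+1,j}-v_{i-1,j})/(2h)$, $\Delta_yv_{ij}=(v_{i,j+1}-v_{i,j-1})/(2h)$, $\nabla_hv=(\Delta_xv,\Delta_yv)^T$, $\delta_x^2v_{ij}=(v_{i+1,j}-2v_{ij}+v_{i-1,j})/h^2$, similarly $\delta_y^2$, $\Delta_h=\delta_x^2+\delta_y^2$. $\|v\|^2=h^2\sum_{\Omega_h}v_h^2$, $\|\nabla_hv\|_{l^q}=(h^2\sum_{\Omega_h}|\nabla_hv_h|^q)^{1/q}$ with $|\cdot|$ Euclidean, $\|\nabla_hv\|=\|\nabla_hv\|_{l^2}$. *)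

theory Defs
  imports Complex_Main
begin

text \<open>Grid functions on the periodic grid: v i j is the value at (i h, j h),
  extended M-periodically in both indices (L-periodic in space).\<close>

definition periodic_grid :: "nat \<Rightarrow> (int \<Rightarrow> int \<Rightarrow> real) \<Rightarrow> bool" where
  "periodic_grid M v \<longleftrightarrow> (\<forall>i j. v (i + int M) j = v i j \<and> v i (j + int M) = v i j)"

definition Dx :: "real \<Rightarrow> (int \<Rightarrow> int \<Rightarrow> real) \<Rightarrow> int \<Rightarrow> int \<Rightarrow> real" where
  "Dx h v i j = (v (i + 1) j - v (i - 1) j) / (2 * h)"

definition Dy :: "real \<Rightarrow> (int \<Rightarrow> int \<Rightarrow> real) \<Rightarrow> int \<Rightarrow> int \<Rightarrow> real" where
  "Dy h v i j = (v i (j + 1) - v i (j - 1)) / (2 * h)"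

definition dxx :: "real \<Rightarrow> (int \<Rightarrow> int \<Rightarrow> real) \<Rightarrow> int \<Rightarrow> int \<Rightarrow> real" where
  "dxx h v i j = (v (i + 1) j - 2 * v i j + v (i - 1) j) / h\<^sup>2"

definition dyy :: "real \<Rightarrow> (int \<Rightarrow> int \<Rightarrow> real) \<Rightarrow> int \<Rightarrow> int \<Rightarrow> real" where
  "dyy h v i j = (v i (j + 1) - 2 * v i j + v i (j - 1)) / h\<^sup>2"

definition lap_h :: "real \<Rightarrow> (int \<Rightarrow> int \<Rightarrow> real) \<Rightarrow> int \<Rightarrow> int \<Rightarrow> real" where
  "lap_h h v i j = dxx h v i j + dyy h v i j"

definition grad_abs :: "real \<Rightarrow> (int \<Rightarrow> int \<Rightarrow> real) \<Rightarrow> int \<Rightarrow> int \<Rightarrow> real" where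
  "grad_abs h v i j = sqrt ((Dx h v i j)\<^sup>2 + (Dy h v i j)\<^sup>2)"

definition l2_norm :: "real \<Rightarrow> nat \<Rightarrow> (int \<Rightarrow> int \<Rightarrow> real) \<Rightarrow> real" where
  "l2_norm h M f = sqrt (h\<^sup>2 * (\<Sum>i\<in>{1..int M}. \<Sum>j\<in>{1..int M}. (f i j)\<^sup>2))"

definition grad_lq :: "real \<Rightarrow> nat \<Rightarrow> real \<Rightarrow> (int \<Rightarrow> int \<Rightarrow> real) \<Rightarrow> real" where
  "grad_lq h M q v = (h\<^sup>2 * (\<Sum>i\<in>{1..int M}. \<Sum>j\<in>{1..int M}. (grad_abs h v i j) powr q)) powr (1 / q)"

end

theory Submission
  imports Defs "HOL-Analysis.Convex"
begin


definition SS :: "nat \<Rightarrow> (int \<Rightarrow> int \<Rightarrow> real) \<Rightarrow> real" where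
  "SS M f = (\<Sum>i\<in>{1..int M}. \<Sum>j\<in>{1..int M}. f i j)"

lemma shift1:
  fixes p :: "int \<Rightarrow> real"
  assumes "\<And>i. p (i + int M) = p i"
  shows "(\<Sum>i\<in>{1..int M}. p (i + 1)) = (\<Sum>i\<in>{1..int M}. p i)"
proof (cases "M = 0")
  case True then show ?thesis by simp
next
  case False
  have "(\<Sum>i\<in>{1..int M}. p (i + 1)) = (\<Sum>i\<in>{2..int M + 1}. p i)"
    by (rule sum.reindex_bij_witness[of _ "\<lambda>i. i - 1" "\<lambda>i. i + 1"]) auto
  also have "{2..int M + 1} = insert (int M + 1) {2..int M}" using False by auto
  also have "(\<Sum>i\<in>insert (int M + 1) {2..int M}. p i) = p (int M + 1) + (\<Sum>i\<in>{2..int M}. p i)"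
    by simp
  also have "p (int M + 1) = p 1" using assms[of 1] by (simp add: add.commute)
  also have "p 1 + (\<Sum>i\<in>{2..int M}. p i) = (\<Sum>i\<in>insert 1 {2..int M}. p i)" by simp
  also have "insert 1 {2..int M} = {1..int M}" using False by auto
  finally show ?thesis .
qed

lemma shift1m:
  fixes p :: "int \<Rightarrow> real"
  assumes "\<And>i. p (i + int M) = p i"
  shows "(\<Sum>i\<in>{1..int M}. p (i - 1)) = (\<Sum>i\<in>{1..int M}. p i)"
proof -
  have h: "(\<Sum>i\<in>{1..int M}. p (i + 1 - 1)) = (\<Sum>i\<in>{1..int M}. p (i - 1))"
    apply (rule shift1[where p = "\<lambda>i. p (i - 1)"])
    subgoal for i using assms[of "i - 1"] by (simp add: algebra_simps)
    done
  then show ?thesis by simp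
qed

lemma SS_shift:
  assumes "periodic_grid M f"
  shows "SS M (\<lambda>i j. f (i + 1) j) = SS M f"
    "SS M (\<lambda>i j. f (i - 1) j) = SS M f"
    "SS M (\<lambda>i j. f i (j + 1)) = SS M f"
    "SS M (\<lambda>i j. f i (j - 1)) = SS M f"
proof -
  have px: "\<And>i j. f (i + int M) j = f i j" and py: "\<And>i j. f i (j + int M) = f i j"
    using assms unfolding periodic_grid_def by auto
  show "SS M (\<lambda>i j. f (i + 1) j) = SS M f" unfolding SS_def
    by (subst sum.swap, subst (2) sum.swap, rule sum.cong[OF refl], rule shift1) (use px in auto)
  show "SS M (\<lambda>i j. f (i - 1) j) = SS M f" unfolding SS_def
    by (subst sum.swap, subst (2) sum.swap, rule sum.cong[OF refl], rule shift1m) (use px in auto)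
  show "SS M (\<lambda>i j. f i (j + 1)) = SS M f" unfolding SS_def
    by (rule sum.cong[OF refl], rule shift1) (use py in auto)
  show "SS M (\<lambda>i j. f i (j - 1)) = SS M f" unfolding SS_def
    by (rule sum.cong[OF refl], rule shift1m) (use py in auto)
qed

lemma telescope:
  fixes q :: "int \<Rightarrow> real"
  shows "(\<Sum>i\<in>{a..<a + int n}. q (i + 1) - q i) = q (a + int n) - q a"
proof (induction n)
  case 0 then show ?case by simp
next
  case (Suc n)
  have "{a..<a + int (Suc n)} = insert (a + int n) {a..<a + int n}" by auto
  then show ?case using Suc by (simp add: ac_simps)
qed

lemma dist_le_var:
  fixes q :: "int \<Rightarrow> real"
  assumes "k \<in> {1..int M}" "m \<in> {1..int M}"
  shows "\<bar>q k - q m\<bar> \<le> (\<Sum>i\<in>{1..int M}. \<bar>q (i + 1) - q i\<bar>)"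
proof -
  have gen: "\<bar>q b - q a\<bar> \<le> (\<Sum>i\<in>{1..int M}. \<bar>q (i + 1) - q i\<bar>)"
    if "a \<le> b" "a \<in> {1..int M}" "b \<in> {1..int M}" for a b
  proof -
    have e: "a + int (nat (b - a)) = b" using that by simp
    have "q b - q a = (\<Sum>i\<in>{a..<b}. q (i + 1) - q i)"
      using telescope[of q a "nat (b - a)"] unfolding e by simp
    then have "\<bar>q b - q a\<bar> \<le> (\<Sum>i\<in>{a..<b}. \<bar>q (i + 1) - q i\<bar>)"
      using sum_abs[of "\<lambda>i. q (i + 1) - q i" "{a..<b}"] by simp
    also have "\<dots> \<le> (\<Sum>i\<in>{1..int M}. \<bar>q (i + 1) - q i\<bar>)"
      by (rule sum_mono2) (use that in auto)
    finally show ?thesis .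
  qed
  show ?thesis
  proof (cases "m \<le> k")
    case True then show ?thesis using gen[of m k] assms by simp
  next
    case False then show ?thesis using gen[of k m] assms by (simp add: abs_minus_commute)
  qed
qed

lemma exists_below_mean:
  fixes q :: "int \<Rightarrow> real"
  assumes "M \<ge> 1"
  shows "\<exists>m\<in>{1..int M}. q m \<le> (\<Sum>i\<in>{1..int M}. q i) / real M"
proof (rule ccontr)
  assume "\<not> ?thesis"
  then have "\<And>m. m \<in> {1..int M} \<Longrightarrow> (\<Sum>i\<in>{1..int M}. q i) / real M < q m" by (auto simp: not_le)
  then have "(\<Sum>m\<in>{1..int M}. (\<Sum>i\<in>{1..int M}. q i) / real M) < (\<Sum>m\<in>{1..int M}. q m)"
    by (intro sum_strict_mono) (use assms in auto)
  then show False using assms by simp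
qed

lemma max_bound:
  fixes q :: "int \<Rightarrow> real"
  assumes "M \<ge> 1" "k \<in> {1..int M}"
  shows "q k \<le> (\<Sum>i\<in>{1..int M}. q i) / real M + (\<Sum>i\<in>{1..int M}. \<bar>q (i + 1) - q i\<bar>)"
proof -
  obtain m where m: "m \<in> {1..int M}" "q m \<le> (\<Sum>i\<in>{1..int M}. q i) / real M"
    using exists_below_mean[OF assms(1)] by blast
  have "q k \<le> q m + \<bar>q k - q m\<bar>" by simp
  then show ?thesis using m dist_le_var[OF assms(2) m(1), of q] by linarith
qed

lemma ladyz_core:
  fixes r :: "int \<Rightarrow> int \<Rightarrow> real"
  assumes r0: "\<And>i j. 0 \<le> r i j"
    and A: "\<And>i j. i \<in> {1..int M} \<Longrightarrow> j \<in> {1..int M} \<Longrightarrow> r i j \<le> A j"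
    and B: "\<And>i j. i \<in> {1..int M} \<Longrightarrow> j \<in> {1..int M} \<Longrightarrow> r i j \<le> B i"
  shows "SS M (\<lambda>i j. (r i j)\<^sup>2) \<le> (\<Sum>j\<in>{1..int M}. A j) * (\<Sum>i\<in>{1..int M}. B i)"
proof -
  have "SS M (\<lambda>i j. (r i j)\<^sup>2) \<le> (\<Sum>i\<in>{1..int M}. \<Sum>j\<in>{1..int M}. B i * A j)"
    unfolding SS_def
  proof (intro sum_mono)
    fix i j assume ij: "i \<in> {1..int M}" "j \<in> {1..int M}"
    have "r i j * r i j \<le> B i * A j"
      by (rule mult_mono) (use A[OF ij] B[OF ij] r0[of i j] in auto)
    then show "(r i j)\<^sup>2 \<le> B i * A j" by (simp add: power2_eq_square)
  qed
  also have "\<dots> = (\<Sum>j\<in>{1..int M}. \<Sum>i\<in>{1..int M}. A j * B i)"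
    by (subst sum.swap) (simp add: mult.commute)
  also have "\<dots> = (\<Sum>j\<in>{1..int M}. A j) * (\<Sum>i\<in>{1..int M}. B i)"
    by (simp add: sum_product)
  finally show ?thesis .
qed

lemma SS_CS:
  "SS M (\<lambda>i j. \<bar>a i j\<bar> * \<bar>c i j\<bar>) \<le> sqrt (SS M (\<lambda>i j. (a i j)\<^sup>2)) * sqrt (SS M (\<lambda>i j. (c i j)\<^sup>2))"
proof -
  let ?I = "{1..int M} \<times> {1..int M}"
  have e: "\<And>f. SS M f = (\<Sum>x\<in>?I. f (fst x) (snd x))"
    unfolding SS_def by (simp add: sum.cartesian_product split_def)
  have "(\<Sum>x\<in>?I. \<bar>a (fst x) (snd x)\<bar> * \<bar>c (fst x) (snd x)\<bar>)\<^sup>2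
      \<le> (\<Sum>x\<in>?I. \<bar>a (fst x) (snd x)\<bar>\<^sup>2) * (\<Sum>x\<in>?I. \<bar>c (fst x) (snd x)\<bar>\<^sup>2)"
    by (rule Cauchy_Schwarz_ineq_sum)
  then have "(\<Sum>x\<in>?I. \<bar>a (fst x) (snd x)\<bar> * \<bar>c (fst x) (snd x)\<bar>)
      \<le> sqrt ((\<Sum>x\<in>?I. (a (fst x) (snd x))\<^sup>2) * (\<Sum>x\<in>?I. (c (fst x) (snd x))\<^sup>2))"
    by (simp add: real_le_rsqrt)
  then show ?thesis unfolding e by (simp add: real_sqrt_mult)
qed

lemma SS_add: "SS M (\<lambda>i j. a i j + b i j) = SS M a + SS M b"
  unfolding SS_def by (simp add: sum.distrib)
lemma SS_cmult: "SS M (\<lambda>i j. c * a i j) = c * SS M a"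
  unfolding SS_def by (simp add: sum_distrib_left)
lemma SS_mono: "(\<And>i j. a i j \<le> b i j) \<Longrightarrow> SS M a \<le> SS M b"
  unfolding SS_def by (intro sum_mono) auto
lemma SS_nonneg: "(\<And>i j. 0 \<le> a i j) \<Longrightarrow> 0 \<le> SS M a"
  unfolding SS_def by (intro sum_nonneg) auto
lemma SS_swap: "(\<Sum>j\<in>{1..int M}. \<Sum>i\<in>{1..int M}. a i j) = SS M a"
  unfolding SS_def by (rule sum.swap)

lemma per_comp: "periodic_grid M f \<Longrightarrow> periodic_grid M (\<lambda>i j. \<phi> (f i j))"
  unfolding periodic_grid_def by auto

lemma ladyz_gen:
  fixes r :: "int \<Rightarrow> int \<Rightarrow> real"
  assumes M: "M \<ge> 1" and r0: "\<And>i j. 0 \<le> r i j"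
  shows "SS M (\<lambda>i j. (r i j)\<^sup>2) \<le> (SS M r / real M + SS M (\<lambda>i j. \<bar>r (i + 1) j - r i j\<bar>))
      * (SS M r / real M + SS M (\<lambda>i j. \<bar>r i (j + 1) - r i j\<bar>))"
proof -
  define A where "A j = (\<Sum>i\<in>{1..int M}. r i j) / real M + (\<Sum>i\<in>{1..int M}. \<bar>r (i + 1) j - r i j\<bar>)" for j
  define B where "B i = (\<Sum>j\<in>{1..int M}. r i j) / real M + (\<Sum>j\<in>{1..int M}. \<bar>r i (j + 1) - r i j\<bar>)" for i
  have "SS M (\<lambda>i j. (r i j)\<^sup>2) \<le> (\<Sum>j\<in>{1..int M}. A j) * (\<Sum>i\<in>{1..int M}. B i)"
  proof (rule ladyz_core[OF r0])
    fix i j assume ij: "i \<in> {1..int M}" "j \<in> {1..int M}"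
    show "r i j \<le> A j" unfolding A_def by (rule max_bound[OF M ij(1)])
    show "r i j \<le> B i" unfolding B_def by (rule max_bound[OF M ij(2)])
  qed
  also have "(\<Sum>j\<in>{1..int M}. A j) = SS M r / real M + SS M (\<lambda>i j. \<bar>r (i + 1) j - r i j\<bar>)"
    unfolding A_def by (simp add: sum.distrib sum_divide_distrib[symmetric] SS_swap)
  also have "(\<Sum>i\<in>{1..int M}. B i) = SS M r / real M + SS M (\<lambda>i j. \<bar>r i (j + 1) - r i j\<bar>)"
    unfolding B_def SS_def by (simp add: sum.distrib sum_divide_distrib[symmetric])
  finally show ?thesis .
qed

lemma est2:
  fixes f g :: "int \<Rightarrow> int \<Rightarrow> real"
  assumes "SS M (\<lambda>i j. (g i j)\<^sup>2) = SS M (\<lambda>i j. (f i j)\<^sup>2)"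
  shows "SS M (\<lambda>i j. \<bar>(g i j)\<^sup>2 - (f i j)\<^sup>2\<bar>) \<le>
     2 * sqrt (SS M (\<lambda>i j. (g i j - f i j)\<^sup>2)) * sqrt (SS M (\<lambda>i j. (f i j)\<^sup>2))"
proof -
  have b4: "SS M (\<lambda>i j. (g i j + f i j)\<^sup>2) \<le> 4 * SS M (\<lambda>i j. (f i j)\<^sup>2)"
  proof -
    have "SS M (\<lambda>i j. (g i j + f i j)\<^sup>2) \<le> SS M (\<lambda>i j. 2 * (g i j)\<^sup>2 + 2 * (f i j)\<^sup>2)"
    proof (rule SS_mono)
      fix i j
      have "0 \<le> (g i j - f i j)\<^sup>2" by simp
      then show "(g i j + f i j)\<^sup>2 \<le> 2 * (g i j)\<^sup>2 + 2 * (f i j)\<^sup>2"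
        by (simp add: power2_eq_square algebra_simps)
    qed
    also have "SS M (\<lambda>i j. 2 * (g i j)\<^sup>2 + 2 * (f i j)\<^sup>2) = 4 * SS M (\<lambda>i j. (f i j)\<^sup>2)"
      unfolding SS_add SS_cmult assms by simp
    finally show ?thesis .
  qed
  have s4: "sqrt (SS M (\<lambda>i j. (g i j + f i j)\<^sup>2)) \<le> 2 * sqrt (SS M (\<lambda>i j. (f i j)\<^sup>2))"
  proof -
    have "sqrt (SS M (\<lambda>i j. (g i j + f i j)\<^sup>2)) \<le> sqrt (4 * SS M (\<lambda>i j. (f i j)\<^sup>2))"
      using b4 by (rule real_sqrt_le_mono)
    also have "sqrt (4 * SS M (\<lambda>i j. (f i j)\<^sup>2)) = 2 * sqrt (SS M (\<lambda>i j. (f i j)\<^sup>2))"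
      by (simp add: real_sqrt_mult)
    finally show ?thesis .
  qed
  have fac: "\<And>x y::real. \<bar>x\<^sup>2 - y\<^sup>2\<bar> = \<bar>x - y\<bar> * \<bar>x + y\<bar>"
  proof -
    fix x y :: real
    have "x\<^sup>2 - y\<^sup>2 = (x - y) * (x + y)" by (simp add: power2_eq_square algebra_simps)
    then show "\<bar>x\<^sup>2 - y\<^sup>2\<bar> = \<bar>x - y\<bar> * \<bar>x + y\<bar>" by (simp add: abs_mult)
  qed
  have "SS M (\<lambda>i j. \<bar>(g i j)\<^sup>2 - (f i j)\<^sup>2\<bar>) = SS M (\<lambda>i j. \<bar>g i j - f i j\<bar> * \<bar>g i j + f i j\<bar>)"
    by (simp only: fac)
  also have "\<dots> \<le> sqrt (SS M (\<lambda>i j. (g i j - f i j)\<^sup>2)) * sqrt (SS M (\<lambda>i j. (g i j + f i j)\<^sup>2))"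
    by (rule SS_CS)
  also have "\<dots> \<le> sqrt (SS M (\<lambda>i j. (g i j - f i j)\<^sup>2)) * (2 * sqrt (SS M (\<lambda>i j. (f i j)\<^sup>2)))"
    using s4 by (rule mult_left_mono) (simp add: SS_nonneg)
  finally show ?thesis by (simp only: mult_ac)
qed

lemma sqrt9: "sqrt (9::real) = 3"
proof -
  have "(9::real) = 3\<^sup>2" by simp
  then show ?thesis by simp
qed

lemma est3:
  fixes f g :: "int \<Rightarrow> int \<Rightarrow> real"
  assumes "SS M (\<lambda>i j. (g i j)^4) = SS M (\<lambda>i j. (f i j)^4)"
  shows "SS M (\<lambda>i j. \<bar>(g i j)^3 - (f i j)^3\<bar>) \<le>
     3 * sqrt (SS M (\<lambda>i j. (g i j - f i j)\<^sup>2)) * sqrt (SS M (\<lambda>i j. (f i j)^4))"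
proof -
  have b9: "SS M (\<lambda>i j. (3/2 * ((g i j)\<^sup>2 + (f i j)\<^sup>2))\<^sup>2) \<le> 9 * SS M (\<lambda>i j. (f i j)^4)"
  proof -
    have "SS M (\<lambda>i j. (3/2 * ((g i j)\<^sup>2 + (f i j)\<^sup>2))\<^sup>2) \<le> SS M (\<lambda>i j. 9/2 * (g i j)^4 + 9/2 * (f i j)^4)"
    proof (rule SS_mono)
      fix i j
      have "0 \<le> ((g i j)\<^sup>2 - (f i j)\<^sup>2)\<^sup>2" by simp
      then show "(3/2 * ((g i j)\<^sup>2 + (f i j)\<^sup>2))\<^sup>2 \<le> 9/2 * (g i j)^4 + 9/2 * (f i j)^4"
        by (simp add: power2_eq_square algebra_simps power4_eq_xxxx)
    qed
    also have "SS M (\<lambda>i j. 9/2 * (g i j)^4 + 9/2 * (f i j)^4) = 9 * SS M (\<lambda>i j. (f i j)^4)"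
      unfolding SS_add SS_cmult assms by simp
    finally show ?thesis .
  qed
  have s9: "sqrt (SS M (\<lambda>i j. (3/2 * ((g i j)\<^sup>2 + (f i j)\<^sup>2))\<^sup>2)) \<le> 3 * sqrt (SS M (\<lambda>i j. (f i j)^4))"
  proof -
    have "sqrt (SS M (\<lambda>i j. (3/2 * ((g i j)\<^sup>2 + (f i j)\<^sup>2))\<^sup>2)) \<le> sqrt (9 * SS M (\<lambda>i j. (f i j)^4))"
      using b9 by (rule real_sqrt_le_mono)
    also have "sqrt (9 * SS M (\<lambda>i j. (f i j)^4)) = 3 * sqrt (SS M (\<lambda>i j. (f i j)^4))"
      by (simp add: real_sqrt_mult sqrt9)
    finally show ?thesis .
  qed
  have pt: "\<bar>a^3 - b^3\<bar> \<le> \<bar>a - b\<bar> * \<bar>3/2 * (a\<^sup>2 + b\<^sup>2)\<bar>" for a b :: real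
  proof -
    have e: "a^3 - b^3 = (a - b) * (a\<^sup>2 + a * b + b\<^sup>2)" by (simp add: power2_eq_square power3_eq_cube algebra_simps)
    have p: "0 \<le> a\<^sup>2 + a * b + b\<^sup>2"
    proof -
      have "0 \<le> (a + b)\<^sup>2 + a\<^sup>2 + b\<^sup>2" by simp
      then show ?thesis by (simp add: power2_eq_square algebra_simps)
    qed
    have q: "a\<^sup>2 + a * b + b\<^sup>2 \<le> 3/2 * (a\<^sup>2 + b\<^sup>2)"
    proof -
      have "0 \<le> (a - b)\<^sup>2" by simp
      then show ?thesis by (simp add: power2_eq_square algebra_simps)
    qed
    have "\<bar>a^3 - b^3\<bar> = \<bar>a - b\<bar> * (a\<^sup>2 + a * b + b\<^sup>2)"
      unfolding e abs_mult using p by simp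
    also have "\<dots> \<le> \<bar>a - b\<bar> * \<bar>3/2 * (a\<^sup>2 + b\<^sup>2)\<bar>"
      by (rule mult_left_mono) (use q in auto)
    finally show ?thesis .
  qed
  have "SS M (\<lambda>i j. \<bar>(g i j)^3 - (f i j)^3\<bar>) \<le> SS M (\<lambda>i j. \<bar>g i j - f i j\<bar> * \<bar>3/2 * ((g i j)\<^sup>2 + (f i j)\<^sup>2)\<bar>)"
    by (rule SS_mono) (rule pt)
  also have "\<dots> \<le> sqrt (SS M (\<lambda>i j. (g i j - f i j)\<^sup>2)) * sqrt (SS M (\<lambda>i j. (3/2 * ((g i j)\<^sup>2 + (f i j)\<^sup>2))\<^sup>2))"
    by (rule SS_CS)
  also have "\<dots> \<le> sqrt (SS M (\<lambda>i j. (g i j - f i j)\<^sup>2)) * (3 * sqrt (SS M (\<lambda>i j. (f i j)^4)))"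
    using s9 by (rule mult_left_mono) (simp add: SS_nonneg)
  finally show ?thesis by (simp only: mult_ac)
qed

lemma pq4: "((x::real)\<^sup>2)\<^sup>2 = x^4" by simp
lemma pq6: "((x::real)^3)\<^sup>2 = x^6" by simp

lemma L4:
  fixes f :: "int \<Rightarrow> int \<Rightarrow> real"
  assumes M: "M \<ge> 1" and per: "periodic_grid M f" and f0: "\<And>i j. 0 \<le> f i j"
  shows "SS M (\<lambda>i j. (f i j)^4) \<le>
     (SS M (\<lambda>i j. (f i j)\<^sup>2) / real M + 2 * sqrt (SS M (\<lambda>i j. (f (i + 1) j - f i j)\<^sup>2)) * sqrt (SS M (\<lambda>i j. (f i j)\<^sup>2)))
   * (SS M (\<lambda>i j. (f i j)\<^sup>2) / real M + 2 * sqrt (SS M (\<lambda>i j. (f i (j + 1) - f i j)\<^sup>2)) * sqrt (SS M (\<lambda>i j. (f i j)\<^sup>2)))"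
proof -
  have p2: "periodic_grid M (\<lambda>i j. (f i j)\<^sup>2)" by (rule per_comp[OF per])
  have s1: "SS M (\<lambda>i j. (f (i + 1) j)\<^sup>2) = SS M (\<lambda>i j. (f i j)\<^sup>2)"
    using SS_shift(1)[OF p2] by simp
  have s2: "SS M (\<lambda>i j. (f i (j + 1))\<^sup>2) = SS M (\<lambda>i j. (f i j)\<^sup>2)"
    using SS_shift(3)[OF p2] by simp
  have "SS M (\<lambda>i j. ((f i j)\<^sup>2)\<^sup>2) \<le> (SS M (\<lambda>i j. (f i j)\<^sup>2) / real M + SS M (\<lambda>i j. \<bar>(f (i + 1) j)\<^sup>2 - (f i j)\<^sup>2\<bar>))
      * (SS M (\<lambda>i j. (f i j)\<^sup>2) / real M + SS M (\<lambda>i j. \<bar>(f i (j + 1))\<^sup>2 - (f i j)\<^sup>2\<bar>))"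
    by (rule ladyz_gen[OF M]) simp
  also have "\<dots> \<le> (SS M (\<lambda>i j. (f i j)\<^sup>2) / real M + 2 * sqrt (SS M (\<lambda>i j. (f (i + 1) j - f i j)\<^sup>2)) * sqrt (SS M (\<lambda>i j. (f i j)\<^sup>2)))
   * (SS M (\<lambda>i j. (f i j)\<^sup>2) / real M + 2 * sqrt (SS M (\<lambda>i j. (f i (j + 1) - f i j)\<^sup>2)) * sqrt (SS M (\<lambda>i j. (f i j)\<^sup>2)))"
    apply (rule mult_mono)
    using est2[of M "\<lambda>i j. f (i + 1) j" f, OF s1] est2[of M "\<lambda>i j. f i (j + 1)" f, OF s2]
    by (auto intro!: add_nonneg_nonneg divide_nonneg_nonneg SS_nonneg mult_nonneg_nonneg real_sqrt_ge_zero)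
  finally show ?thesis by (simp only: pq4)
qed

lemma L6:
  fixes f :: "int \<Rightarrow> int \<Rightarrow> real"
  assumes M: "M \<ge> 1" and per: "periodic_grid M f" and f0: "\<And>i j. 0 \<le> f i j"
  shows "SS M (\<lambda>i j. (f i j)^6) \<le>
     (sqrt (SS M (\<lambda>i j. (f i j)\<^sup>2)) * sqrt (SS M (\<lambda>i j. (f i j)^4)) / real M + 3 * sqrt (SS M (\<lambda>i j. (f (i + 1) j - f i j)\<^sup>2)) * sqrt (SS M (\<lambda>i j. (f i j)^4)))
   * (sqrt (SS M (\<lambda>i j. (f i j)\<^sup>2)) * sqrt (SS M (\<lambda>i j. (f i j)^4)) / real M + 3 * sqrt (SS M (\<lambda>i j. (f i (j + 1) - f i j)\<^sup>2)) * sqrt (SS M (\<lambda>i j. (f i j)^4)))"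
proof -
  have p4: "periodic_grid M (\<lambda>i j. (f i j)^4)" by (rule per_comp[OF per])
  have s1: "SS M (\<lambda>i j. (f (i + 1) j)^4) = SS M (\<lambda>i j. (f i j)^4)"
    using SS_shift(1)[OF p4] by simp
  have s2: "SS M (\<lambda>i j. (f i (j + 1))^4) = SS M (\<lambda>i j. (f i j)^4)"
    using SS_shift(3)[OF p4] by simp
  have c: "SS M (\<lambda>i j. (f i j)^3) \<le> sqrt (SS M (\<lambda>i j. (f i j)\<^sup>2)) * sqrt (SS M (\<lambda>i j. (f i j)^4))"
  proof -
    have "SS M (\<lambda>i j. (f i j)^3) = SS M (\<lambda>i j. \<bar>f i j\<bar> * \<bar>(f i j)\<^sup>2\<bar>)"
      using f0 by (simp add: power2_eq_square power3_eq_cube mult_ac)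
    also have "\<dots> \<le> sqrt (SS M (\<lambda>i j. (f i j)\<^sup>2)) * sqrt (SS M (\<lambda>i j. ((f i j)\<^sup>2)\<^sup>2))"
      by (rule SS_CS)
    finally show ?thesis by (simp only: pq4)
  qed
  have "SS M (\<lambda>i j. ((f i j)^3)\<^sup>2) \<le> (SS M (\<lambda>i j. (f i j)^3) / real M + SS M (\<lambda>i j. \<bar>(f (i + 1) j)^3 - (f i j)^3\<bar>))
      * (SS M (\<lambda>i j. (f i j)^3) / real M + SS M (\<lambda>i j. \<bar>(f i (j + 1))^3 - (f i j)^3\<bar>))"
    by (rule ladyz_gen[OF M]) (simp add: f0)
  also have "\<dots> \<le> (sqrt (SS M (\<lambda>i j. (f i j)\<^sup>2)) * sqrt (SS M (\<lambda>i j. (f i j)^4)) / real M + 3 * sqrt (SS M (\<lambda>i j. (f (i + 1) j - f i j)\<^sup>2)) * sqrt (SS M (\<lambda>i j. (f i j)^4)))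
   * (sqrt (SS M (\<lambda>i j. (f i j)\<^sup>2)) * sqrt (SS M (\<lambda>i j. (f i j)^4)) / real M + 3 * sqrt (SS M (\<lambda>i j. (f i (j + 1) - f i j)\<^sup>2)) * sqrt (SS M (\<lambda>i j. (f i j)^4)))"
    apply (rule mult_mono)
    using est3[of M "\<lambda>i j. f (i + 1) j" f, OF s1] est3[of M "\<lambda>i j. f i (j + 1)" f, OF s2] c
      by (auto intro!: add_mono divide_right_mono add_nonneg_nonneg divide_nonneg_nonneg SS_nonneg mult_nonneg_nonneg real_sqrt_ge_zero simp: f0)
  finally show ?thesis by (simp only: pq6)
qed



lemma pg_rules:
  assumes "periodic_grid M v"
  shows "v (x + int M) y = v x y" "v x (y + int M) = v x y"
    "v (x + int M + c) y = v (x + c) y" "v (x + int M - c) y = v (x - c) y"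
    "v x (y + int M + c) = v x (y + c)" "v x (y + int M - c) = v x (y - c)"
  using assms unfolding periodic_grid_def
  by (auto simp: algebra_simps) (metis add.commute add.left_commute diff_add_eq)+

lemma sbp:
  assumes per: "periodic_grid M v"
  shows "SS M (\<lambda>i j. (v (i+1) (j+1) - v (i+1) j - v i (j+1) + v i j)\<^sup>2)
       = SS M (\<lambda>i j. (v (i+1) j - 2 * v i j + v (i-1) j) * (v i (j+1) - 2 * v i j + v i (j-1)))"
proof -
  define u where "u i j = v (i+1) j - v i j" for i j
  define e where "e i j = v i (j+1) - 2 * v i j + v i (j-1)" for i j
  have pu: "periodic_grid M u" unfolding periodic_grid_def u_def using pg_rules[OF per] by simp
  have pe: "periodic_grid M e" unfolding periodic_grid_def e_def using pg_rules[OF per] by simp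
  have pue: "periodic_grid M (\<lambda>i j. u i j * e (i+1) j)"
    unfolding periodic_grid_def u_def e_def using pg_rules[OF per] by simp
  have puu: "periodic_grid M (\<lambda>i j. u i (j+1) * u i j)"
    unfolding periodic_grid_def u_def using pg_rules[OF per] by simp
  have pu2: "periodic_grid M (\<lambda>i j. (u i j)\<^sup>2)" by (rule per_comp[OF pu])
  have "SS M (\<lambda>i j. (v (i+1) j - 2 * v i j + v (i-1) j) * e i j)
      = SS M (\<lambda>i j. u i j * e i j) - SS M (\<lambda>i j. u (i-1) j * e i j)"
    unfolding u_def by (simp add: SS_add[symmetric] SS_cmult[symmetric, where c="-1"] algebra_simps) 
  also have "SS M (\<lambda>i j. u (i-1) j * e i j) = SS M (\<lambda>i j. u i j * e (i+1) j)"
    using SS_shift(2)[OF pue] by simp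
  also have "SS M (\<lambda>i j. u i j * e i j) - SS M (\<lambda>i j. u i j * e (i+1) j)
      = 2 * SS M (\<lambda>i j. (u i j)\<^sup>2) - SS M (\<lambda>i j. u i (j+1) * u i j) - SS M (\<lambda>i j. u i j * u i (j-1))"
    unfolding u_def e_def
    by (simp add: SS_add[symmetric] SS_cmult[symmetric] algebra_simps power2_eq_square) 
  also have "SS M (\<lambda>i j. u i j * u i (j-1)) = SS M (\<lambda>i j. u i (j+1) * u i j)"
    using SS_shift(4)[OF puu] by (simp add: mult.commute)
  also have "2 * SS M (\<lambda>i j. (u i j)\<^sup>2) - SS M (\<lambda>i j. u i (j+1) * u i j) - SS M (\<lambda>i j. u i (j+1) * u i j)
     = SS M (\<lambda>i j. (u i (j+1) - u i j)\<^sup>2)"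
  proof -
    have "SS M (\<lambda>i j. (u i (j+1) - u i j)\<^sup>2) = SS M (\<lambda>i j. (u i (j+1))\<^sup>2) + SS M (\<lambda>i j. (u i j)\<^sup>2) - 2 * SS M (\<lambda>i j. u i (j+1) * u i j)"
      by (simp add: SS_add[symmetric] SS_cmult[symmetric] algebra_simps power2_eq_square) 
    moreover have "SS M (\<lambda>i j. (u i (j+1))\<^sup>2) = SS M (\<lambda>i j. (u i j)\<^sup>2)"
      using SS_shift(3)[OF pu2] by simp
    ultimately show ?thesis by simp
  qed
  finally show ?thesis unfolding u_def e_def by (simp add: algebra_simps)
qed



lemma rev_tri: "(sqrt (a\<^sup>2 + b\<^sup>2) - sqrt (c\<^sup>2 + d\<^sup>2))\<^sup>2 \<le> (a - c)\<^sup>2 + (b - d)\<^sup>2"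
proof -
  have t1: "sqrt (a\<^sup>2 + b\<^sup>2) \<le> sqrt ((a - c)\<^sup>2 + (b - d)\<^sup>2) + sqrt (c\<^sup>2 + d\<^sup>2)"
    using real_sqrt_sum_squares_triangle_ineq[of "a - c" c "b - d" d] by simp
  have t2: "sqrt (c\<^sup>2 + d\<^sup>2) \<le> sqrt ((a - c)\<^sup>2 + (b - d)\<^sup>2) + sqrt (a\<^sup>2 + b\<^sup>2)"
    using real_sqrt_sum_squares_triangle_ineq[of "c - a" a "d - b" b]
    by (simp add: power2_commute)
  have "\<bar>sqrt (a\<^sup>2 + b\<^sup>2) - sqrt (c\<^sup>2 + d\<^sup>2)\<bar> \<le> sqrt ((a - c)\<^sup>2 + (b - d)\<^sup>2)"
    using t1 t2 by linarith
  then have "\<bar>sqrt (a\<^sup>2 + b\<^sup>2) - sqrt (c\<^sup>2 + d\<^sup>2)\<bar>\<^sup>2 \<le> (sqrt ((a - c)\<^sup>2 + (b - d)\<^sup>2))\<^sup>2"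
    by (rule power_mono) simp
  then show ?thesis by simp
qed

lemma avg_le:
  assumes "SS M (\<lambda>i j. (Y i j)\<^sup>2) = SS M (\<lambda>i j. (X i j)\<^sup>2)"
  shows "SS M (\<lambda>i j. ((Y i j + X i j) / (2 * h))\<^sup>2) \<le> SS M (\<lambda>i j. (X i j)\<^sup>2) / h\<^sup>2"
proof -
  have "SS M (\<lambda>i j. ((Y i j + X i j) / (2 * h))\<^sup>2) \<le> SS M (\<lambda>i j. 1 / (2 * h\<^sup>2) * (Y i j)\<^sup>2 + 1 / (2 * h\<^sup>2) * (X i j)\<^sup>2)"
  proof (rule SS_mono)
    fix i j
    have "0 \<le> (Y i j - X i j)\<^sup>2" by simp
    then have "(Y i j + X i j)\<^sup>2 \<le> 2 * (Y i j)\<^sup>2 + 2 * (X i j)\<^sup>2"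
      by (simp add: power2_eq_square algebra_simps)
    then have "(Y i j + X i j)\<^sup>2 / (4 * h\<^sup>2) \<le> (2 * (Y i j)\<^sup>2 + 2 * (X i j)\<^sup>2) / (4 * h\<^sup>2)"
      by (rule divide_right_mono) simp
    then show "((Y i j + X i j) / (2 * h))\<^sup>2 \<le> 1 / (2 * h\<^sup>2) * (Y i j)\<^sup>2 + 1 / (2 * h\<^sup>2) * (X i j)\<^sup>2"
    proof -
      have e1: "((Y i j + X i j) / (2 * h))\<^sup>2 = (Y i j + X i j)\<^sup>2 / (4 * h\<^sup>2)"
        by (simp add: power_divide power_mult_distrib)
      have e2: "1 / (2 * h\<^sup>2) * (Y i j)\<^sup>2 + 1 / (2 * h\<^sup>2) * (X i j)\<^sup>2 = (2 * (Y i j)\<^sup>2 + 2 * (X i j)\<^sup>2) / (4 * h\<^sup>2)"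
        by (cases "h = 0") (simp_all add: field_simps)
      show ?thesis unfolding e1 e2 by fact
    qed
  qed
  also have "\<dots> = SS M (\<lambda>i j. (X i j)\<^sup>2) / h\<^sup>2"
    unfolding SS_add SS_cmult assms by simp
  finally show ?thesis .
qed

lemma stepC:
  assumes per: "periodic_grid M v" and h: "h \<noteq> 0"
  shows "SS M (\<lambda>i j. (grad_abs h v (i+1) j - grad_abs h v i j)\<^sup>2)
       + SS M (\<lambda>i j. (grad_abs h v i (j+1) - grad_abs h v i j)\<^sup>2)
       \<le> h\<^sup>2 * SS M (\<lambda>i j. (lap_h h v i j)\<^sup>2)"
proof -
  define X where "X i j = v (i+1) j - 2 * v i j + v (i-1) j" for i j
  define Y where "Y i j = v i (j+1) - 2 * v i j + v i (j-1)" for i j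
  define m where "m i j = v (i+1) (j+1) - v (i+1) j - v i (j+1) + v i j" for i j
  have pX: "periodic_grid M (\<lambda>i j. (X i j)\<^sup>2)" unfolding periodic_grid_def X_def using pg_rules[OF per] by simp
  have pY: "periodic_grid M (\<lambda>i j. (Y i j)\<^sup>2)" unfolding periodic_grid_def Y_def using pg_rules[OF per] by simp
  have pm: "periodic_grid M (\<lambda>i j. (m i j)\<^sup>2)" unfolding periodic_grid_def m_def using pg_rules[OF per] by simp
  have e1: "Dx h v (i+1) j - Dx h v i j = (X (i+1) j + X i j) / (2 * h)" for i j
    unfolding Dx_def X_def using h by (simp add: field_simps)
  have e2: "Dy h v (i+1) j - Dy h v i j = (m i (j-1) + m i j) / (2 * h)" for i j
    unfolding Dy_def m_def using h by (simp add: field_simps)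
  have e3: "Dx h v i (j+1) - Dx h v i j = (m (i-1) j + m i j) / (2 * h)" for i j
    unfolding Dx_def m_def using h by (simp add: field_simps)
  have e4: "Dy h v i (j+1) - Dy h v i j = (Y i (j+1) + Y i j) / (2 * h)" for i j
    unfolding Dy_def Y_def using h by (simp add: field_simps)
  have r1: "(grad_abs h v (i+1) j - grad_abs h v i j)\<^sup>2 \<le>
     ((X (i+1) j + X i j) / (2 * h))\<^sup>2 + ((m i (j-1) + m i j) / (2 * h))\<^sup>2" for i j
    unfolding grad_abs_def e1[symmetric] e2[symmetric] by (rule rev_tri)
  have r2: "(grad_abs h v i (j+1) - grad_abs h v i j)\<^sup>2 \<le>
     ((m (i-1) j + m i j) / (2 * h))\<^sup>2 + ((Y i (j+1) + Y i j) / (2 * h))\<^sup>2" for i j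
    unfolding grad_abs_def e3[symmetric] e4[symmetric] by (rule rev_tri)
  have a1: "SS M (\<lambda>i j. ((X (i+1) j + X i j) / (2 * h))\<^sup>2) \<le> SS M (\<lambda>i j. (X i j)\<^sup>2) / h\<^sup>2"
    by (rule avg_le) (use SS_shift(1)[OF pX] in simp)
  have a2: "SS M (\<lambda>i j. ((m i (j-1) + m i j) / (2 * h))\<^sup>2) \<le> SS M (\<lambda>i j. (m i j)\<^sup>2) / h\<^sup>2"
    by (rule avg_le) (use SS_shift(4)[OF pm] in simp)
  have a3: "SS M (\<lambda>i j. ((m (i-1) j + m i j) / (2 * h))\<^sup>2) \<le> SS M (\<lambda>i j. (m i j)\<^sup>2) / h\<^sup>2"
    by (rule avg_le) (use SS_shift(2)[OF pm] in simp)
  have a4: "SS M (\<lambda>i j. ((Y i (j+1) + Y i j) / (2 * h))\<^sup>2) \<le> SS M (\<lambda>i j. (Y i j)\<^sup>2) / h\<^sup>2"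
    by (rule avg_le) (use SS_shift(3)[OF pY] in simp)
  have mm: "SS M (\<lambda>i j. (m i j)\<^sup>2) = SS M (\<lambda>i j. X i j * Y i j)"
    unfolding m_def X_def Y_def by (rule sbp[OF per])
  have "SS M (\<lambda>i j. (grad_abs h v (i+1) j - grad_abs h v i j)\<^sup>2)
       + SS M (\<lambda>i j. (grad_abs h v i (j+1) - grad_abs h v i j)\<^sup>2)
     \<le> (SS M (\<lambda>i j. ((X (i+1) j + X i j) / (2 * h))\<^sup>2) + SS M (\<lambda>i j. ((m i (j-1) + m i j) / (2 * h))\<^sup>2))
       + (SS M (\<lambda>i j. ((m (i-1) j + m i j) / (2 * h))\<^sup>2) + SS M (\<lambda>i j. ((Y i (j+1) + Y i j) / (2 * h))\<^sup>2))"
    unfolding SS_add[symmetric] by (intro add_mono SS_mono r1 r2)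
  also have "\<dots> \<le> (SS M (\<lambda>i j. (X i j)\<^sup>2) + 2 * SS M (\<lambda>i j. (m i j)\<^sup>2) + SS M (\<lambda>i j. (Y i j)\<^sup>2)) / h\<^sup>2"
    using a1 a2 a3 a4 by (simp add: add_divide_distrib)
  also have "SS M (\<lambda>i j. (X i j)\<^sup>2) + 2 * SS M (\<lambda>i j. (m i j)\<^sup>2) + SS M (\<lambda>i j. (Y i j)\<^sup>2)
      = SS M (\<lambda>i j. (X i j + Y i j)\<^sup>2)"
    unfolding mm by (simp add: SS_add[symmetric] SS_cmult[symmetric] power2_eq_square algebra_simps)
  also have "SS M (\<lambda>i j. (X i j + Y i j)\<^sup>2) / h\<^sup>2 = h\<^sup>2 * SS M (\<lambda>i j. (lap_h h v i j)\<^sup>2)"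
  proof -
    have l: "lap_h h v i j = (X i j + Y i j) / h\<^sup>2" for i j
      unfolding lap_h_def dxx_def dyy_def X_def Y_def by (simp add: diff_divide_distrib add_divide_distrib)
    have "h\<^sup>2 * SS M (\<lambda>i j. (lap_h h v i j)\<^sup>2) = SS M (\<lambda>i j. h\<^sup>2 * (lap_h h v i j)\<^sup>2)"
      by (simp add: SS_cmult)
    also have "\<dots> = SS M (\<lambda>i j. 1 / h\<^sup>2 * (X i j + Y i j)\<^sup>2)"
    proof -
      have pw: "h\<^sup>2 * (z / h\<^sup>2)\<^sup>2 = 1 / h\<^sup>2 * z\<^sup>2" for z :: real
        using h by (simp add: power2_eq_square field_simps)
      show ?thesis unfolding l pw ..
    qed
    also have "\<dots> = SS M (\<lambda>i j. (X i j + Y i j)\<^sup>2) / h\<^sup>2"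
      by (simp only: SS_cmult) simp
    finally show ?thesis by simp
  qed
  finally show ?thesis .
qed



lemma sq_powr:
  fixes x r :: real
  assumes "0 \<le> x" shows "(x\<^sup>2) powr r = x powr (2 * r)"
proof -
  have "x\<^sup>2 = x powr 2" using assms by simp
  then show ?thesis by (simp add: powr_powr)
qed

lemma fin4:
  fixes Y u B :: real
  assumes "0 \<le> Y" "0 \<le> u" "0 \<le> B" "Y \<le> 4 * u\<^sup>2 * B"
  shows "Y powr (1/4) \<le> 2 * u powr (1/2) * B powr (1/4)"
proof -
  have "Y powr (1/4) \<le> (4 * u\<^sup>2 * B) powr (1/4)"
    by (rule powr_mono2) (use assms in auto)
  also have "\<dots> = 4 powr (1/4) * (u\<^sup>2) powr (1/4) * B powr (1/4)"
    using assms by (simp add: powr_mult)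
  also have "(u\<^sup>2) powr (1/4) = u powr (1/2)" using assms by (simp add: sq_powr)
  also have "4 powr (1/4) * u powr (1/2) * B powr (1/4) \<le> 2 * u powr (1/2) * B powr (1/4)"
  proof -
    have "(4::real) powr (1/4) \<le> 4 powr (1/2)" by (rule powr_mono) auto
    also have "(4::real) powr (1/2) = 2" by (simp add: powr_half_sqrt)
    finally have "(4::real) powr (1/4) \<le> 2" .
    then show ?thesis by (intro mult_right_mono) auto
  qed
  finally show ?thesis .
qed

lemma fin6:
  fixes Y u B :: real
  assumes "0 \<le> Y" "0 \<le> u" "0 \<le> B" "Y \<le> 8 * u\<^sup>2 * B\<^sup>2"
  shows "Y powr (1/6) \<le> 2 * u powr (1/3) * B powr (1/3)"
proof -
  have "Y powr (1/6) \<le> (8 * u\<^sup>2 * B\<^sup>2) powr (1/6)"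
    by (rule powr_mono2) (use assms in auto)
  also have "\<dots> = 8 powr (1/6) * (u\<^sup>2) powr (1/6) * (B\<^sup>2) powr (1/6)"
    using assms by (simp add: powr_mult)
  also have "(u\<^sup>2) powr (1/6) = u powr (1/3)" using assms by (simp add: sq_powr)
  also have "(B\<^sup>2) powr (1/6) = B powr (1/3)" using assms by (simp add: sq_powr)
  also have "8 powr (1/6) * u powr (1/3) * B powr (1/3) \<le> 2 * u powr (1/3) * B powr (1/3)"
  proof -
    have "(8::real) powr (1/6) \<le> 8 powr (1/3)" by (rule powr_mono) auto
    also have "(8::real) powr (1/3) = (2 powr 3) powr (1/3)" by simp
    also have "\<dots> = 2" by (simp add: powr_powr)
    finally have "(8::real) powr (1/6) \<le> 2" .
    then show ?thesis by (intro mult_right_mono) auto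
  qed
  finally show ?thesis .
qed

lemma sq_sum_le: "((x::real) + y)\<^sup>2 \<le> 2 * x\<^sup>2 + 2 * y\<^sup>2"
proof -
  have "0 \<le> (x - y)\<^sup>2" by simp
  then show ?thesis by (simp add: power2_eq_square algebra_simps)
qed

lemma core4:
  fixes u q L Z :: real
  assumes "L > 0" "0 \<le> u" "0 \<le> q" "Z \<le> (u\<^sup>2 / L + 2 * q * u)\<^sup>2"
  shows "Z \<le> 4 * u\<^sup>2 * (2 * q\<^sup>2 + u\<^sup>2 / L\<^sup>2)"
proof -
  have "(u\<^sup>2 / L + 2 * q * u)\<^sup>2 \<le> 2 * (u\<^sup>2 / L)\<^sup>2 + 2 * (2 * q * u)\<^sup>2"
    by (rule sq_sum_le)
  also have "2 * (u\<^sup>2 / L)\<^sup>2 + 2 * (2 * q * u)\<^sup>2 = 8 * u\<^sup>2 * q\<^sup>2 + 2 * (u\<^sup>2)\<^sup>2 / L\<^sup>2"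
    by (simp add: power_divide power_mult_distrib)
  also have "\<dots> \<le> 8 * u\<^sup>2 * q\<^sup>2 + 4 * (u\<^sup>2)\<^sup>2 / L\<^sup>2"
    using assms by (simp add: divide_right_mono)
  also have "\<dots> = 4 * u\<^sup>2 * (2 * q\<^sup>2 + u\<^sup>2 / L\<^sup>2)"
    by (simp add: algebra_simps power2_eq_square)
  finally show ?thesis using assms by linarith
qed



theorem lemma3p5:
  fixes L :: real
  assumes "L > 0"
  shows "\<exists>K1 K2 :: real. K1 > 0 \<and> K2 > 0 \<and>
    (\<forall>(M::nat) (v :: int \<Rightarrow> int \<Rightarrow> real). M \<ge> 1 \<longrightarrow> periodic_grid M v \<longrightarrow>
      (let h = L / real M in
        grad_lq h M 4 v \<le> K1 * (l2_norm h M (grad_abs h v)) powr (1/2)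
            * (2 * (l2_norm h M (lap_h h v))\<^sup>2 + (l2_norm h M (grad_abs h v))\<^sup>2 / L\<^sup>2) powr (1/4)
      \<and> grad_lq h M 6 v \<le> K2 * (l2_norm h M (grad_abs h v)) powr (1/3)
            * (16 * (l2_norm h M (lap_h h v))\<^sup>2 + (l2_norm h M (grad_abs h v))\<^sup>2 / L\<^sup>2) powr (1/3)))"
proof (intro exI[of _ "2::real"] conjI allI impI)
  fix M :: nat and v :: "int \<Rightarrow> int \<Rightarrow> real"
  assume M: "M \<ge> 1" and per: "periodic_grid M v"
  define h where "h = L / real M"
  have hpos: "h > 0" unfolding h_def using assms M by simp
  have hM: "h * real M = L" unfolding h_def using M by simp
  have Mpos: "real M > 0" using M by simp
  define g where "g = grad_abs h v"
  have g0: "\<And>i j. 0 \<le> g i j" unfolding g_def grad_abs_def by simp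
  have pg: "periodic_grid M g"
    unfolding periodic_grid_def g_def grad_abs_def Dx_def Dy_def using pg_rules[OF per] by simp
  define F where "F = SS M (\<lambda>i j. (g i j)\<^sup>2)"
  define Da where "Da = SS M (\<lambda>i j. (g (i + 1) j - g i j)\<^sup>2)"
  define Db where "Db = SS M (\<lambda>i j. (g i (j + 1) - g i j)\<^sup>2)"
  define X4 where "X4 = SS M (\<lambda>i j. (g i j)^4)"
  define X6 where "X6 = SS M (\<lambda>i j. (g i j)^6)"
  define P2 where "P2 = SS M (\<lambda>i j. (lap_h h v i j)\<^sup>2)"
  have F0: "0 \<le> F" and Da0: "0 \<le> Da" and Db0: "0 \<le> Db" and X40: "0 \<le> X4" and X60: "0 \<le> X6"
    and P20: "0 \<le> P2"
    unfolding F_def Da_def Db_def X4_def X6_def P2_def using g0 by (auto intro!: SS_nonneg)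
  have l4: "X4 \<le> (F / real M + 2 * sqrt Da * sqrt F) * (F / real M + 2 * sqrt Db * sqrt F)"
    unfolding X4_def F_def Da_def Db_def by (rule L4[OF M pg g0])
  have l6: "X6 \<le> (sqrt F * sqrt X4 / real M + 3 * sqrt Da * sqrt X4) * (sqrt F * sqrt X4 / real M + 3 * sqrt Db * sqrt X4)"
    unfolding X4_def F_def Da_def Db_def X6_def by (rule L6[OF M pg g0])
  have lC: "Da + Db \<le> h\<^sup>2 * P2"
    unfolding Da_def Db_def P2_def g_def using stepC[OF per] hpos by simp
  define f where "f = sqrt F"
  define p where "p = sqrt P2"
  define u where "u = h * f"
  define q where "q = h * p"
  have f0: "0 \<le> f" and p0: "0 \<le> p" and u0: "0 \<le> u" and q0: "0 \<le> q"
    unfolding f_def p_def u_def q_def using F0 P20 hpos by auto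
  have hp: "sqrt (h\<^sup>2 * P2) = q" unfolding q_def p_def using hpos by (simp add: real_sqrt_mult)
  have a_le: "sqrt Da \<le> q"
    using lC Db0 hp real_sqrt_le_mono[of Da "h\<^sup>2 * P2"] by linarith
  have b_le: "sqrt Db \<le> q"
    using lC Da0 hp real_sqrt_le_mono[of Db "h\<^sup>2 * P2"] by linarith
  have n1: "l2_norm h M g = u"
    unfolding l2_norm_def u_def f_def F_def SS_def using hpos by (simp add: real_sqrt_mult)
  have n2: "(l2_norm h M (lap_h h v))\<^sup>2 = q\<^sup>2"
    unfolding l2_norm_def hp[symmetric] P2_def SS_def using P20 hpos
    by (simp add: P2_def SS_def)
  have n4: "grad_lq h M 4 v = (h\<^sup>2 * X4) powr (1/4)"
    unfolding grad_lq_def X4_def SS_def g_def using g0[unfolded g_def] by simp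
  have n6: "grad_lq h M 6 v = (h\<^sup>2 * X6) powr (1/6)"
    unfolding grad_lq_def X6_def SS_def g_def using g0[unfolded g_def] by simp
  have Ff: "F = f\<^sup>2" unfolding f_def using F0 by simp
  have t4: "h\<^sup>2 * X4 \<le> (u\<^sup>2 / L + 2 * q * u)\<^sup>2"
  proof -
    have "X4 \<le> (F / real M + 2 * sqrt Da * sqrt F) * (F / real M + 2 * sqrt Db * sqrt F)" by (rule l4)
    also have "\<dots> \<le> (F / real M + 2 * q * f) * (F / real M + 2 * q * f)"
      using a_le b_le F0 Da0 Db0 f0 q0 Mpos unfolding f_def
      by (intro mult_mono add_mono) (auto intro!: mult_right_mono)
    finally have "h\<^sup>2 * X4 \<le> h\<^sup>2 * ((F / real M + 2 * q * f) * (F / real M + 2 * q * f))"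
      by (rule mult_left_mono) simp
    also have "\<dots> = (h * (F / real M + 2 * q * f))\<^sup>2"
      by (simp add: power2_eq_square mult_ac)
    also have "h * (F / real M + 2 * q * f) = u\<^sup>2 / L + 2 * q * u"
    proof -
      have "h * (F / real M) = u\<^sup>2 / L"
        unfolding Ff u_def hM[symmetric] using Mpos hpos by (simp add: power2_eq_square)
      then show ?thesis unfolding u_def by (simp add: distrib_left mult_ac)
    qed
    finally show ?thesis .
  qed
  have c4: "h\<^sup>2 * X4 \<le> 4 * u\<^sup>2 * (2 * q\<^sup>2 + u\<^sup>2 / L\<^sup>2)"
    by (rule core4[OF assms u0 q0 t4])
  have t6: "h\<^sup>2 * X6 \<le> (h\<^sup>2 * X4) * (u / L + 3 * q)\<^sup>2"
  proof -
    have "X6 \<le> (sqrt F * sqrt X4 / real M + 3 * sqrt Da * sqrt X4) * (sqrt F * sqrt X4 / real M + 3 * sqrt Db * sqrt X4)"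
      by (rule l6)
    also have "\<dots> \<le> (sqrt F * sqrt X4 / real M + 3 * q * sqrt X4) * (sqrt F * sqrt X4 / real M + 3 * q * sqrt X4)"
      using a_le b_le F0 Da0 Db0 X40 q0 Mpos
      by (intro mult_mono add_mono) (auto intro!: mult_right_mono)
    also have "sqrt F * sqrt X4 / real M + 3 * q * sqrt X4 = sqrt X4 * (f / real M + 3 * q)"
      unfolding f_def by (simp add: distrib_left mult_ac)
    also have "(sqrt X4 * (f / real M + 3 * q)) * (sqrt X4 * (f / real M + 3 * q)) = (sqrt X4 * (f / real M + 3 * q))\<^sup>2"
      by (simp add: power2_eq_square)
    also have "\<dots> = X4 * (f / real M + 3 * q)\<^sup>2"
      using X40 by (simp add: power_mult_distrib)
    finally have "h\<^sup>2 * X6 \<le> h\<^sup>2 * (X4 * (f / real M + 3 * q)\<^sup>2)"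
      by (rule mult_left_mono) simp
    also have "f / real M = u / L"
      unfolding u_def hM[symmetric] using hpos by simp
    also have "h\<^sup>2 * (X4 * (u / L + 3 * q)\<^sup>2) = (h\<^sup>2 * X4) * (u / L + 3 * q)\<^sup>2"
      by (simp add: mult_ac)
    finally show ?thesis .
  qed
  define B6 where "B6 = 16 * q\<^sup>2 + u\<^sup>2 / L\<^sup>2"
  have B60: "0 \<le> B6" unfolding B6_def by simp
  have c6: "h\<^sup>2 * X6 \<le> 8 * u\<^sup>2 * B6\<^sup>2"
  proof -
    have s1: "(u / L + 3 * q)\<^sup>2 \<le> 2 * B6"
    proof -
      have "(u / L + 3 * q)\<^sup>2 \<le> 2 * (u / L)\<^sup>2 + 2 * (3 * q)\<^sup>2" by (rule sq_sum_le)
      also have "\<dots> \<le> 2 * B6" unfolding B6_def by (simp add: power_divide power_mult_distrib)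
      finally show ?thesis .
    qed
    have s2: "h\<^sup>2 * X4 \<le> 4 * u\<^sup>2 * B6"
    proof -
      have "4 * u\<^sup>2 * (2 * q\<^sup>2 + u\<^sup>2 / L\<^sup>2) \<le> 4 * u\<^sup>2 * B6"
        unfolding B6_def by (rule mult_left_mono) auto
      then show ?thesis using c4 by linarith
    qed
    have "h\<^sup>2 * X6 \<le> (4 * u\<^sup>2 * B6) * (2 * B6)"
    proof -
      have "(h\<^sup>2 * X4) * (u / L + 3 * q)\<^sup>2 \<le> (4 * u\<^sup>2 * B6) * (2 * B6)"
        by (rule mult_mono[OF s2 s1]) (use B60 in auto)
      then show ?thesis using t6 by linarith
    qed
    also have "\<dots> = 8 * u\<^sup>2 * B6\<^sup>2" by (simp add: power2_eq_square)
    finally show ?thesis .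
  qed
  have "grad_lq h M 4 v \<le> 2 * (l2_norm h M (grad_abs h v)) powr (1/2)
            * (2 * (l2_norm h M (lap_h h v))\<^sup>2 + (l2_norm h M (grad_abs h v))\<^sup>2 / L\<^sup>2) powr (1/4)"
    unfolding g_def[symmetric] n1 n2 n4 using fin4[OF _ u0 _ c4] X40 by simp
  moreover have "grad_lq h M 6 v \<le> 2 * (l2_norm h M (grad_abs h v)) powr (1/3)
            * (16 * (l2_norm h M (lap_h h v))\<^sup>2 + (l2_norm h M (grad_abs h v))\<^sup>2 / L\<^sup>2) powr (1/3)"
    unfolding g_def[symmetric] n1 n2 n6 using fin6[OF _ u0 B60 c6] X60 unfolding B6_def by simp
  ultimately show "let h = L / real M in
        grad_lq h M 4 v \<le> 2 * (l2_norm h M (grad_abs h v)) powr (1/2)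
            * (2 * (l2_norm h M (lap_h h v))\<^sup>2 + (l2_norm h M (grad_abs h v))\<^sup>2 / L\<^sup>2) powr (1/4)
      \<and> grad_lq h M 6 v \<le> 2 * (l2_norm h M (grad_abs h v)) powr (1/3)
            * (16 * (l2_norm h M (lap_h h v))\<^sup>2 + (l2_norm h M (grad_abs h v))\<^sup>2 / L\<^sup>2) powr (1/3)"
    unfolding h_def Let_def by simp
qed simp_all

end
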